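(* Let $\ell:\mathcal{Z}\times\mathbb{R}^d\to[0,\infty)$ be a non-negative loss, differentiable in the parameter $\Theta\in\mathbb{R}^d$. Let $(p^t)_{t\ge0}$ and $p^*$ be probability densities on $\mathcal{Z}$, and set $c^t\triangleq\int|p^t(z)-p^*(z)|\,dz$. Define the expected risk $\mathcal{L}(\Theta)\triangleq\mathbb{E}_{Z\sim p^*}[\ell(Z;\Theta)]$. Consider the stochastic gradient iteration $$\Theta^{t+1}=\Theta^t-\eta_t\nabla_{\Theta}\ell(Z^t;\Theta^t),$$ where $\eta_t>0$ are step sizes, $\Theta^0$ is an initial (possibly random) parameter, and, conditionally on the past $(\Theta^0,Z^0,\dots,Z^{t-1})$, the sample $Z^t$ has density $p^t$. Assume: (A1) ($L$-smoothness) $\mathcal{L}$ is differentiable and $\nabla\mathcal{L}$ is $L$-Lipschitz; (A3) (finite variance) there is $G>0$ such that for all $t$ and all $\Theta$, $\mathbb{E}_{Z\sim p^t}\big[\Vert\nabla_{\Theta}\ell(Z;\Theta)\Vert^2\big]\le G$; (A4) $\sum_t c^t<\infty$. Then for every $t$, $$\mathbb{E}[\mathcal{L}(\Theta^{t+1})]\le\mathbb{E}[\mathcal{L}(\Theta^{t})]-\eta_t\Big(\mathbb{E}\big[\Vert\nabla\mathcal{L}(\Theta^t)\Vert^2\big]-\sqrt{2}\,G\sqrt{c^t}\Big)+\frac{LG}{2}\eta_t^2,$$ where the expectations are taken over all random variables.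
   Context: This is the setting of a single module $j>1$ in a layer-wise ("greedy") training scheme trained in parallel with the preceding modules: $p^t$ is the time-varying density of the input sample $Z=(X,Y)$ fed to the module at step $t$, $p^*$ is the density of the previous module's output at convergence, and $\Theta$ collects the module's parameters and those of its auxiliary network. *)

theory Defs
  imports "HOL-Probability.Probability"
begin

definition risk :: "('z \<Rightarrow> 'a \<Rightarrow> real) \<Rightarrow> 'z measure \<Rightarrow> ('z \<Rightarrow> real) \<Rightarrow> 'a \<Rightarrow> real" where
  "risk l MZ pstar \<theta> = (\<integral>z. l z \<theta> * pstar z \<partial>MZ)"

definition l1_dist :: "'z measure \<Rightarrow> ('z \<Rightarrow> real) \<Rightarrow> ('z \<Rightarrow> real) \<Rightarrow> real" where
  "l1_dist MZ p q = (\<integral>z. \<bar>p z - q z\<bar> \<partial>MZ)"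

definition is_density :: "'z measure \<Rightarrow> ('z \<Rightarrow> real) \<Rightarrow> bool" where
  "is_density MZ p \<longleftrightarrow> p \<in> borel_measurable MZ \<and> (\<forall>z\<in>space MZ. 0 \<le> p z)
     \<and> (\<integral>\<^sup>+ z. ennreal (p z) \<partial>MZ) = 1"

definition past_events :: "'w measure \<Rightarrow> ('w \<Rightarrow> 'a::topological_space) \<Rightarrow> 'z measure \<Rightarrow> (nat \<Rightarrow> 'w \<Rightarrow> 'z) \<Rightarrow> nat \<Rightarrow> 'w set set" where
  "past_events M Theta0 MZ Z t = sigma_sets (space M)
     ({Theta0 -` A \<inter> space M | A. A \<in> sets borel}
      \<union> (\<Union>i<t. {Z i -` B \<inter> space M | B. B \<in> sets MZ}))"

end

theory Submission
  imports Defs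
begin



lemma carath_meas:
  fixes f :: "'z \<Rightarrow> 'a::euclidean_space \<Rightarrow> real"
  assumes fm: "\<And>\<theta>. (\<lambda>z. f z \<theta>) \<in> borel_measurable MZ" and fc: "\<And>z. continuous_on UNIV (f z)"
  shows "(\<lambda>x. f (fst x) (snd x)) \<in> borel_measurable (MZ \<Otimes>\<^sub>M (borel :: 'a measure))"
proof -
  obtain F where F: "\<And>i. simple_function (borel::'a measure) (F i)"
     "\<And>x. (\<lambda>i. F i x) \<longlonglongrightarrow> x"
    using borel_measurable_implies_sequence_metric[of "\<lambda>x. x" "borel::'a measure" 0] by auto
  have m: "(\<lambda>x. f (fst x) (F i (snd x))) \<in> borel_measurable (MZ \<Otimes>\<^sub>M (borel :: 'a measure))" for i
  proof (rule measurable_compose_countable'[where I="range (F i)" and f="\<lambda>c x. f (fst x) c"])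
    show "(\<lambda>x. f (fst x) c) \<in> borel_measurable (MZ \<Otimes>\<^sub>M borel)" for c
      by (rule measurable_compose[OF measurable_fst fm])
    have fin: "finite (range (F i))" using F(1)[of i] by (simp add: simple_function_def)
    have pre: "F i -` {a} \<in> sets borel" for a
      using measurable_sets[OF measurable_simple_function[OF F(1)[of i]], of "{a}"] by simp
    have "F i \<in> measurable borel (count_space (range (F i)))"
      unfolding measurable_count_space_eq2[OF fin] using pre by auto
    then show "(\<lambda>x. F i (snd x)) \<in> measurable (MZ \<Otimes>\<^sub>M borel) (count_space (range (F i)))"
      using measurable_compose[OF measurable_snd] by blast
    show "countable (range (F i))" using fin by (rule countable_finite)
  qed
  show ?thesis
  proof (rule borel_measurable_LIMSEQ_real[OF _ m])
    fix x :: "'z \<times> 'a"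
    show "(\<lambda>i. f (fst x) (F i (snd x))) \<longlonglongrightarrow> f (fst x) (snd x)"
      using continuous_on_tendsto_compose[OF fc F(2)] by auto
  qed
qed



lemma dir_deriv_seq:
  fixes F :: "'a::real_normed_vector \<Rightarrow> real"
  assumes d: "(F has_derivative D) (at x)"
  shows "(\<lambda>n. (F (x + (1/real (Suc n)) *\<^sub>R v) - F x) / (1/real (Suc n))) \<longlonglongrightarrow> D v"
proof -
  have lin: "linear D" using d has_derivative_linear by blast
  have g: "((\<lambda>t::real. x + t *\<^sub>R v) has_derivative (\<lambda>t. t *\<^sub>R v)) (at 0)"
    by (auto intro!: derivative_eq_intros)
  have "((\<lambda>t. F (x + t *\<^sub>R v)) has_derivative (\<lambda>t. D (t *\<^sub>R v))) (at 0)"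
    using has_derivative_compose[OF g, of F D] d by simp
  moreover have "(\<lambda>t. D (t *\<^sub>R v)) = (\<lambda>t. D v * t)"
    using linear_scale[OF lin] by (auto simp: mult.commute)
  ultimately have "((\<lambda>t. F (x + t *\<^sub>R v)) has_derivative (*) (D v)) (at 0)"
    by metis
  then have "((\<lambda>t. F (x + t *\<^sub>R v)) has_field_derivative D v) (at 0)"
    by (simp add: has_field_derivative_def)
  then have lim: "((\<lambda>h. (F (x + h *\<^sub>R v) - F x) / h) \<longlongrightarrow> D v) (at 0)"
    unfolding DERIV_def by simp
  have s: "(\<lambda>n. 1/real (Suc n)) \<longlonglongrightarrow> 0" by (rule LIMSEQ_Suc[OF lim_inverse_n'])
  show ?thesis
  proof -
    have "\<forall>S. (\<forall>n. S n \<noteq> 0) \<and> S \<longlonglongrightarrow> 0 \<longrightarrow> (\<lambda>n. (F (x + S n *\<^sub>R v) - F x) / S n) \<longlonglongrightarrow> D v"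
      using lim unfolding LIMSEQ_SEQ_conv[symmetric] by simp
    from this[rule_format, of "\<lambda>n. 1/real (Suc n)"] s show ?thesis by simp
  qed
qed

lemma grad_meas:
  fixes f :: "'z \<Rightarrow> 'a::euclidean_space \<Rightarrow> real" and gf :: "'z \<Rightarrow> 'a \<Rightarrow> 'a"
  assumes fm: "\<And>\<theta>. (\<lambda>z. f z \<theta>) \<in> borel_measurable MZ"
    and fd: "\<And>z \<theta>. (f z has_derivative (\<lambda>h. gf z \<theta> \<bullet> h)) (at \<theta>)"
  shows "(\<lambda>x. gf (fst x) (snd x)) \<in> borel_measurable (MZ \<Otimes>\<^sub>M (borel::'a measure))"
proof -
  have fc: "continuous_on UNIV (f z)" for z
    by (rule continuous_at_imp_continuous_on) (use fd has_derivative_continuous in blast)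
  have j: "(\<lambda>x. f (fst x) (snd x)) \<in> borel_measurable (MZ \<Otimes>\<^sub>M (borel::'a measure))"
    by (rule carath_meas[OF fm fc])
  have "\<forall>b\<in>Basis. (\<lambda>x. gf (fst x) (snd x) \<bullet> b) \<in> borel_measurable (MZ \<Otimes>\<^sub>M (borel::'a measure))"
  proof (rule ballI)
    fix b :: 'a assume b: "b \<in> Basis"
    have m: "(\<lambda>x. (f (fst x) (snd x + (1/real (Suc n)) *\<^sub>R b) - f (fst x) (snd x)) / (1/real (Suc n)))
       \<in> borel_measurable (MZ \<Otimes>\<^sub>M borel)" for n
    proof -
      have "(\<lambda>x. (fst x, snd x + (1/real (Suc n)) *\<^sub>R b)) \<in> measurable (MZ \<Otimes>\<^sub>M borel) (MZ \<Otimes>\<^sub>M (borel::'a measure))"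
        by measurable
      from measurable_compose[OF this j]
      have m1: "(\<lambda>x. f (fst x) (snd x + (1/real (Suc n)) *\<^sub>R b)) \<in> borel_measurable (MZ \<Otimes>\<^sub>M borel)"
        by simp
      show ?thesis using m1 j by measurable
    qed
    show "(\<lambda>x. gf (fst x) (snd x) \<bullet> b) \<in> borel_measurable (MZ \<Otimes>\<^sub>M borel)"
      by (rule borel_measurable_LIMSEQ_real[OF _ m]) (rule dir_deriv_seq[OF fd])
  qed
  then show ?thesis using borel_measurable_euclidean_space by blast
qed





lemma descent:
  fixes R :: "'a::real_inner \<Rightarrow> real"
  assumes d: "\<And>\<theta>. (R has_derivative (\<lambda>h. gR \<theta> \<bullet> h)) (at \<theta>)" and lip: "L-lipschitz_on UNIV gR"
  shows "R y \<le> R x + gR x \<bullet> (y - x) + L/2 * (norm (y-x))\<^sup>2"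
proof -
  define v where "v = y - x"
  have L0: "0 \<le> L" using lip lipschitz_on_def by blast
  have g: "((\<lambda>s::real. x + s *\<^sub>R v) has_derivative (\<lambda>s. s *\<^sub>R v)) (at s)" for s
    by (auto intro!: derivative_eq_intros)
  have "((\<lambda>s. R (x + s *\<^sub>R v)) has_derivative (\<lambda>t. gR (x + s *\<^sub>R v) \<bullet> (t *\<^sub>R v))) (at s)" for s
    using has_derivative_compose[OF g d] by simp
  then have "((\<lambda>s. R (x + s *\<^sub>R v)) has_vector_derivative (gR (x + s *\<^sub>R v) \<bullet> v)) (at s within {0..1})" for s
    unfolding has_vector_derivative_def by (auto intro: has_derivative_at_withinI simp: mult.commute)
  then have i1: "((\<lambda>s. gR (x + s *\<^sub>R v) \<bullet> v) has_integral (R (x + 1 *\<^sub>R v) - R (x + 0 *\<^sub>R v))) {0..1}"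
    by (intro fundamental_theorem_of_calculus) auto
  have "((\<lambda>s. s * (gR x \<bullet> v) + L * (norm v)\<^sup>2 / 2 * s\<^sup>2) has_vector_derivative (gR x \<bullet> v + L * s * (norm v)\<^sup>2)) (at s within {0..1})" for s
    by (auto intro!: derivative_eq_intros simp: algebra_simps power2_eq_square)
  then have i2: "((\<lambda>s. gR x \<bullet> v + L * s * (norm v)\<^sup>2) has_integral
       ((1 * (gR x \<bullet> v) + L * (norm v)\<^sup>2 / 2 * 1\<^sup>2) - (0 * (gR x \<bullet> v) + L * (norm v)\<^sup>2 / 2 * 0\<^sup>2))) {0..1}"
    by (intro fundamental_theorem_of_calculus) auto
  have le: "gR (x + s *\<^sub>R v) \<bullet> v \<le> gR x \<bullet> v + L * s * (norm v)\<^sup>2" if s: "s \<in> {0..1}" for s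
  proof -
    have "gR (x + s *\<^sub>R v) \<bullet> v - gR x \<bullet> v = (gR (x + s *\<^sub>R v) - gR x) \<bullet> v" by (simp add: inner_diff_left)
    also have "\<dots> \<le> norm (gR (x + s *\<^sub>R v) - gR x) * norm v" by (rule norm_cauchy_schwarz)
    also have "norm (gR (x + s *\<^sub>R v) - gR x) \<le> L * norm (s *\<^sub>R v)"
      using lip unfolding lipschitz_on_def by (metis UNIV_I dist_norm add_diff_cancel_left')
    then have "norm (gR (x + s *\<^sub>R v) - gR x) * norm v \<le> L * norm (s *\<^sub>R v) * norm v"
      by (simp add: mult_right_mono)
    also have "L * norm (s *\<^sub>R v) * norm v = L * s * (norm v)\<^sup>2" using s by (simp add: power2_eq_square)
    finally show ?thesis by simp
  qed
  have "R (x + 1 *\<^sub>R v) - R (x + 0 *\<^sub>R v) \<le> (1 * (gR x \<bullet> v) + L * (norm v)\<^sup>2 / 2 * 1\<^sup>2) - (0 * (gR x \<bullet> v) + L * (norm v)\<^sup>2 / 2 * 0\<^sup>2)"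
    by (rule has_integral_le[OF i1 i2 le])
  then show ?thesis unfolding v_def by simp
qed



lemma amgm_inf:
  fixes a c x :: real
  assumes a: "0 \<le> a" and c: "0 \<le> c" and H: "\<And>t. 0 < t \<Longrightarrow> x \<le> (a*t + c/t)/2"
  shows "x \<le> sqrt (a*c)"
proof (cases "a > 0 \<and> c > 0")
  case True
  define t where "t = sqrt (c/a)"
  have t: "0 < t" using True by (simp add: t_def)
  have "a * t = sqrt (a*c)" using True unfolding t_def
    by (metis less_eq_real_def real_sqrt_divide real_sqrt_mult real_sqrt_mult_self times_divide_eq_right real_div_sqrt mult.commute)
  moreover have "c / t = sqrt (a*c)" using True unfolding t_def
    by (metis less_eq_real_def real_div_sqrt real_sqrt_divide real_sqrt_mult divide_divide_eq_right mult.commute times_divide_eq_left)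
  ultimately show ?thesis using H[OF t] by simp
next
  case False
  then have ac: "a * c = 0" using a c by auto
  show ?thesis
  proof (rule ccontr)
    assume "\<not> x \<le> sqrt (a*c)"
    then have x: "x > 0" using ac by simp
    show False
    proof (cases "a = 0")
      case True
      have t: "0 < (c+1)/x" using x c by simp
      have "x \<le> (c / ((c+1)/x))/2" using H[OF t] True by simp
      also have "\<dots> = c * x / (2*(c+1))" using x c by (simp add: field_simps)
      also have "\<dots> < x" using x c by (simp add: field_simps) (smt (verit) mult_nonneg_nonneg)
      finally show False by simp
    next
      case False
      then have c0: "c = 0" using ac by simp
      have t: "0 < x/(a+1)" using x a by simp
      have "x \<le> (a * (x/(a+1)))/2" using H[OF t] c0 by simp
      also have "\<dots> < x" using x a by (simp add: field_simps) (smt (verit) mult_nonneg_nonneg)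
      finally show False by simp
    qed
  qed
qed

lemma line_sq_bound:
  fixes f :: "'a::real_inner \<Rightarrow> real"
  assumes fd: "\<And>\<theta>. (f has_derivative (\<lambda>h. gf \<theta> \<bullet> h)) (at \<theta>)"
    and meas: "(\<lambda>s. gf (x + s *\<^sub>R v) \<bullet> v) \<in> borel_measurable borel"
    and h: "0 < h"
  shows "ennreal ((f (x + h *\<^sub>R v) - f x)\<^sup>2)
     \<le> ennreal h * (\<integral>\<^sup>+ s. ennreal ((gf (x + s *\<^sub>R v) \<bullet> v)\<^sup>2 * indicator {0..h} s) \<partial>lborel)"
proof -
  define \<phi> where "\<phi> s = gf (x + s *\<^sub>R v) \<bullet> v" for s
  define \<Delta> where "\<Delta> = f (x + h *\<^sub>R v) - f x"
  have g: "((\<lambda>s::real. x + s *\<^sub>R v) has_derivative (\<lambda>s. s *\<^sub>R v)) (at s)" for s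
    by (auto intro!: derivative_eq_intros)
  have "((\<lambda>s. f (x + s *\<^sub>R v)) has_derivative (\<lambda>t. gf (x + s *\<^sub>R v) \<bullet> (t *\<^sub>R v))) (at s)" for s
    using has_derivative_compose[OF g fd] by simp
  then have "((\<lambda>s. f (x + s *\<^sub>R v)) has_vector_derivative \<phi> s) (at s within {0..h})" for s
    unfolding has_vector_derivative_def \<phi>_def by (auto intro: has_derivative_at_withinI simp: mult.commute)
  then have i1: "(\<phi> has_integral \<Delta>) {0..h}"
    unfolding \<Delta>_def using fundamental_theorem_of_calculus[of 0 h "\<lambda>s. f (x + s *\<^sub>R v)" \<phi>] h by simp
  show ?thesis
  proof (cases "(\<integral>\<^sup>+ s. ennreal ((\<phi> s)\<^sup>2 * indicator {0..h} s) \<partial>lborel) = \<infinity>")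
    case True
    then show ?thesis using h by (simp add: \<phi>_def ennreal_mult_top)
  next
    case False
    then obtain A where A: "(\<integral>\<^sup>+ s. ennreal ((\<phi> s)\<^sup>2 * indicator {0..h} s) \<partial>lborel) = ennreal A" "0 \<le> A"
      using ennreal_cases[of "(\<integral>\<^sup>+ s. ennreal ((\<phi> s)\<^sup>2 * indicator {0..h} s) \<partial>lborel)"] by auto
    have "((\<lambda>s. (\<phi> s)\<^sup>2 * indicator {0..h} s) has_integral A) UNIV"
      by (rule nn_integral_has_integral) (use A meas in \<open>auto simp: \<phi>_def\<close>)
    moreover have eq: "(\<lambda>s. (\<phi> s)\<^sup>2 * indicator {0..h} s) = (\<lambda>s. if s \<in> {0..h} then (\<phi> s)\<^sup>2 else 0)"
      by (rule ext) (simp add: indicator_def)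
    ultimately have "((\<lambda>s. if s \<in> {0..h} then (\<phi> s)\<^sup>2 else 0) has_integral A) UNIV"
      by metis
    then have i2: "((\<lambda>s. (\<phi> s)\<^sup>2) has_integral A) {0..h}"
      by (rule has_integral_restrict_UNIV[THEN iffD1])
    have bnd: "\<bar>\<Delta>\<bar> \<le> (A*t + h/t)/2" if t: "0 < t" for t
    proof -
      have i3: "((\<lambda>s. (t * (\<phi> s)\<^sup>2 + 1/t)/2) has_integral ((t * A + h/t)/2)) {0..h}"
      proof -
        have "((\<lambda>s. t * (\<phi> s)\<^sup>2 + 1/t) has_integral (t * A + h * (1/t))) {0..h}"
          using has_integral_add[OF has_integral_mult_right[OF i2, of t] has_integral_const_real[of "1/t" 0 h]] h
          by simp
        from has_integral_mult_left[OF this, of "1/2"] show ?thesis by (simp add: field_simps)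
      qed
      have pt: "\<bar>\<phi> s\<bar> \<le> (t * (\<phi> s)\<^sup>2 + 1/t)/2" for s
      proof -
        have "0 \<le> (t * \<bar>\<phi> s\<bar> - 1)\<^sup>2 / t" using t by simp
        also have "(t * \<bar>\<phi> s\<bar> - 1)\<^sup>2 / t = t * (\<phi> s)\<^sup>2 + 1/t - 2 * \<bar>\<phi> s\<bar>"
          using t by (simp add: power2_eq_square field_simps)
        finally show ?thesis by simp
      qed
      have "\<Delta> \<le> (t * A + h/t)/2"
        by (rule has_integral_le[OF i1 i3]) (use pt in \<open>smt (verit)\<close>)
      moreover have "- \<Delta> \<le> (t * A + h/t)/2"
        by (rule has_integral_le[OF has_integral_neg[OF i1] i3]) (use pt in \<open>smt (verit)\<close>)
      ultimately show ?thesis by (simp add: mult.commute)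
    qed
    have "\<bar>\<Delta>\<bar> \<le> sqrt (A * h)"
      by (rule amgm_inf[OF A(2)]) (use h bnd in auto)
    then have "\<Delta>\<^sup>2 \<le> A * h"
    proof -
      have "\<bar>\<Delta>\<bar>\<^sup>2 \<le> (sqrt (A * h))\<^sup>2" by (rule power_mono[OF \<open>\<bar>\<Delta>\<bar> \<le> sqrt (A * h)\<close> abs_ge_zero])
      also have "\<dots> = A * h" using A(2) h by simp
      finally show ?thesis by simp
    qed
    then have "ennreal (\<Delta>\<^sup>2) \<le> ennreal h * ennreal A"
      using A(2) h by (simp add: ennreal_mult'[symmetric] mult.commute)
    then show ?thesis using A(1) unfolding \<Delta>_def \<phi>_def by simp
  qed
qed





lemma sq_integrable:
  fixes h :: "'z \<Rightarrow> real"
  assumes fin: "finite_measure Q" and hm: "h \<in> borel_measurable Q"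
    and b: "(\<integral>\<^sup>+ z. ennreal ((h z)\<^sup>2) \<partial>Q) \<le> ennreal B"
  shows "integrable Q (\<lambda>z. (h z)\<^sup>2)" "integrable Q h" "integral\<^sup>L Q (\<lambda>z. (h z)\<^sup>2) \<le> max 0 B"
proof -
  interpret finite_measure Q by (rule fin)
  show i2: "integrable Q (\<lambda>z. (h z)\<^sup>2)"
    by (rule integrableI_bounded) (use hm b in \<open>auto simp: top.not_eq_extremum intro: le_less_trans\<close>)
  have "integrable Q (\<lambda>z. (1 + (h z)\<^sup>2)/2)" using i2 by simp
  then show "integrable Q h"
  proof (rule Bochner_Integration.integrable_bound)
    show "h \<in> borel_measurable Q" by (rule hm)
    show "AE x in Q. norm (h x) \<le> norm ((1 + (h x)\<^sup>2) / 2)"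
    proof (rule AE_I2)
      fix x
      have "0 \<le> (\<bar>h x\<bar> - 1)\<^sup>2" by simp
      then have "\<bar>h x\<bar> \<le> (1 + (h x)\<^sup>2)/2" by (simp add: power2_eq_square algebra_simps)
      then show "norm (h x) \<le> norm ((1 + (h x)\<^sup>2) / 2)" by simp
    qed
  qed
  have "ennreal (integral\<^sup>L Q (\<lambda>z. (h z)\<^sup>2)) = (\<integral>\<^sup>+ z. ennreal ((h z)\<^sup>2) \<partial>Q)"
    by (rule nn_integral_eq_integral[OF i2, symmetric]) auto
  also have "\<dots> \<le> ennreal B" by (rule b)
  finally show "integral\<^sup>L Q (\<lambda>z. (h z)\<^sup>2) \<le> max 0 B"
    by (cases "B \<ge> 0") (auto simp: ennreal_le_iff2)
qed


lemma ui_conv: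
  fixes Q :: "'z measure" and f :: "nat \<Rightarrow> 'z \<Rightarrow> real" and g :: "'z \<Rightarrow> real"
  assumes fin: "finite_measure Q"
    and fm: "\<And>n. f n \<in> borel_measurable Q" and gm: "g \<in> borel_measurable Q"
    and lim: "\<And>z. z \<in> space Q \<Longrightarrow> (\<lambda>n. f n z) \<longlonglongrightarrow> g z"
    and bf: "\<And>n. (\<integral>\<^sup>+ z. ennreal ((f n z)\<^sup>2) \<partial>Q) \<le> ennreal B"
    and bg: "(\<integral>\<^sup>+ z. ennreal ((g z)\<^sup>2) \<partial>Q) \<le> ennreal B"
    and B: "0 \<le> B"
  shows "(\<lambda>n. integral\<^sup>L Q (f n)) \<longlonglongrightarrow> integral\<^sup>L Q g"
proof -
  interpret finite_measure Q by (rule fin)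
  note fi = sq_integrable[OF fin fm bf] and gi = sq_integrable[OF fin gm bg]
  define e where "e n z = \<bar>f n z - g z\<bar>" for n z
  have em: "e n \<in> borel_measurable Q" for n unfolding e_def using fm gm by measurable
  have ei: "integrable Q (e n)" for n unfolding e_def using fi(2) gi(2) by auto
  have e2pt: "(e n z)\<^sup>2 \<le> 2 * (f n z)\<^sup>2 + 2 * (g z)\<^sup>2" for n z
  proof -
    have "0 \<le> (f n z + g z)\<^sup>2" by simp
    then show ?thesis unfolding e_def power2_abs by (simp add: power2_eq_square algebra_simps)
  qed
  have e2i: "integrable Q (\<lambda>z. (e n z)\<^sup>2)" for n
  proof (rule Bochner_Integration.integrable_bound)
    show "integrable Q (\<lambda>z. 2 * (f n z)\<^sup>2 + 2 * (g z)\<^sup>2)" using fi(1) gi(1) by simp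
    show "(\<lambda>z. (e n z)\<^sup>2) \<in> borel_measurable Q" using em by simp
    show "AE x in Q. norm ((e n x)\<^sup>2) \<le> norm (2 * (f n x)\<^sup>2 + 2 * (g x)\<^sup>2)"
      using e2pt by simp
  qed
  have e2: "integral\<^sup>L Q (\<lambda>z. (e n z)\<^sup>2) \<le> 4 * B" for n
  proof -
    have "integral\<^sup>L Q (\<lambda>z. (e n z)\<^sup>2) \<le> integral\<^sup>L Q (\<lambda>z. 2 * (f n z)\<^sup>2 + 2 * (g z)\<^sup>2)"
    proof (rule integral_mono)
      show "integrable Q (\<lambda>z. 2 * (f n z)\<^sup>2 + 2 * (g z)\<^sup>2)" using fi(1) gi(1) by auto
      show "integrable Q (\<lambda>z. (e n z)\<^sup>2)" by (rule e2i)
      fix z show "(e n z)\<^sup>2 \<le> 2 * (f n z)\<^sup>2 + 2 * (g z)\<^sup>2" by (rule e2pt)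
    qed
    also have "\<dots> = 2 * integral\<^sup>L Q (\<lambda>z. (f n z)\<^sup>2) + 2 * integral\<^sup>L Q (\<lambda>z. (g z)\<^sup>2)"
      using fi(1) gi(1) by simp
    also have "\<dots> \<le> 4 * B" using fi(3)[of n] gi(3) B by simp
    finally show ?thesis .
  qed
  have split: "integral\<^sup>L Q (e n) \<le> integral\<^sup>L Q (\<lambda>z. min (e n z) K) + 4 * B / K" if K: "0 < K" for n K
  proof -
    have mi: "integrable Q (\<lambda>z. min (e n z) K)"
    proof (rule Bochner_Integration.integrable_bound)
      show "integrable Q (e n)" by (rule ei)
      show "(\<lambda>z. min (e n z) K) \<in> borel_measurable Q" using em by simp
      show "AE x in Q. norm (min (e n x) K) \<le> norm (e n x)" using K by (auto simp: e_def)
    qed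
    have "integral\<^sup>L Q (e n) \<le> integral\<^sup>L Q (\<lambda>z. min (e n z) K + (e n z)\<^sup>2 / K)"
    proof (rule integral_mono)
      show "integrable Q (e n)" by (rule ei)
      show "integrable Q (\<lambda>z. min (e n z) K + (e n z)\<^sup>2 / K)"
        using mi
        using e2i[of n] by simp
      fix z
      show "e n z \<le> min (e n z) K + (e n z)\<^sup>2 / K"
      proof (cases "e n z \<le> K")
        case True then show ?thesis using K by (simp add: e_def)
      next
        case False
        then have "e n z \<le> (e n z)\<^sup>2 / K" using K by (simp add: power2_eq_square field_simps)
        then show ?thesis using False K by simp
      qed
    qed
    also have "\<dots> = integral\<^sup>L Q (\<lambda>z. min (e n z) K) + integral\<^sup>L Q (\<lambda>z. (e n z)\<^sup>2) / K"
      using mi e2i[of n] by simp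
    also have "\<dots> \<le> integral\<^sup>L Q (\<lambda>z. min (e n z) K) + 4 * B / K"
      using e2[of n] K by (simp add: divide_right_mono)
    finally show ?thesis .
  qed
  have dom: "(\<lambda>n. integral\<^sup>L Q (\<lambda>z. min (e n z) K)) \<longlonglongrightarrow> 0" if K: "0 < K" for K
  proof -
    have "(\<lambda>n. integral\<^sup>L Q (\<lambda>z. min (e n z) K)) \<longlonglongrightarrow> integral\<^sup>L Q (\<lambda>z. 0::real)"
    proof (rule integral_dominated_convergence[where w="\<lambda>z. K"])
      show "integrable Q (\<lambda>z. K)" by simp
      show "(\<lambda>z. min (e n z) K) \<in> borel_measurable Q" for n using em by measurable
      show "AE z in Q. norm (min (e n z) K) \<le> K" for n using K by (auto simp: e_def)
      show "AE z in Q. (\<lambda>n. min (e n z) K) \<longlonglongrightarrow> 0"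
      proof (rule AE_I2)
        fix z assume z: "z \<in> space Q"
        have "(\<lambda>n. e n z) \<longlonglongrightarrow> \<bar>g z - g z\<bar>" unfolding e_def
          by (intro tendsto_intros lim[OF z])
        then have "(\<lambda>n. min (e n z) K) \<longlonglongrightarrow> min 0 K" by (intro tendsto_intros) simp
        then show "(\<lambda>n. min (e n z) K) \<longlonglongrightarrow> 0" using K by simp
      qed
    qed simp
    then show ?thesis by simp
  qed
  show ?thesis
  proof (rule LIMSEQ_I)
    fix r :: real assume r: "0 < r"
    define K where "K = 8 * B / r + 1"
    have "0 \<le> 8 * B / r" using B r by simp
    then have K: "0 < K" by (simp add: K_def)
    have KB: "4 * B / K < r / 2"
    proof -
      have "4 * B * 2 < r * K" using r B by (simp add: K_def field_simps)
      then show ?thesis using K by (simp add: field_simps)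
    qed
    obtain N where N: "\<And>n. n \<ge> N \<Longrightarrow> norm (integral\<^sup>L Q (\<lambda>z. min (e n z) K) - 0) < r/2"
      using LIMSEQ_D[OF dom[OF K], of "r/2"] r by auto
    show "\<exists>no. \<forall>n\<ge>no. norm (integral\<^sup>L Q (f n) - integral\<^sup>L Q g) < r"
    proof (intro exI allI impI)
      fix n assume n: "n \<ge> N"
      have "norm (integral\<^sup>L Q (f n) - integral\<^sup>L Q g) = norm (integral\<^sup>L Q (\<lambda>z. f n z - g z))"
        using fi(2) gi(2) by simp
      also have "\<dots> \<le> integral\<^sup>L Q (\<lambda>z. norm (f n z - g z))" by (rule integral_norm_bound)
      also have "\<dots> = integral\<^sup>L Q (e n)" by (simp add: e_def[abs_def])
      also have "\<dots> \<le> integral\<^sup>L Q (\<lambda>z. min (e n z) K) + 4 * B / K" by (rule split[OF K])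
      also have "\<dots> < r" using N[OF n] KB by simp
      finally show "norm (integral\<^sup>L Q (f n) - integral\<^sup>L Q g) < r" .
    qed
  qed
qed





locale lsetting =
  fixes M :: "'w measure" and MZ :: "'z measure"
    and l :: "'z \<Rightarrow> 'a::euclidean_space \<Rightarrow> real" and gl :: "'z \<Rightarrow> 'a \<Rightarrow> 'a"
    and p :: "nat \<Rightarrow> 'z \<Rightarrow> real" and pstar :: "'z \<Rightarrow> real"
    and gL :: "'a \<Rightarrow> 'a" and L G :: real
  assumes l_nonneg: "\<And>z \<theta>. 0 \<le> l z \<theta>"
    and l_meas: "\<And>\<theta>. (\<lambda>z. l z \<theta>) \<in> borel_measurable MZ"
    and l_grad: "\<And>z \<theta>. (l z has_derivative (\<lambda>h. gl z \<theta> \<bullet> h)) (at \<theta>)"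
    and dens: "\<And>s. is_density MZ (p s)" and dens_star: "is_density MZ pstar"
    and risk_finite: "\<And>\<theta>. integrable MZ (\<lambda>z. l z \<theta> * pstar z)"
    and A1_diff: "\<And>\<theta>. (risk l MZ pstar has_derivative (\<lambda>h. gL \<theta> \<bullet> h)) (at \<theta>)"
    and A1_lip: "L-lipschitz_on UNIV gL"
    and G_pos: "G > 0"
    and A3: "\<And>s \<theta>. (\<integral>\<^sup>+ z. ennreal ((norm (gl z \<theta>))\<^sup>2 * p s z) \<partial>MZ) \<le> ennreal G"
    and A4: "summable (\<lambda>s. l1_dist MZ (p s) pstar)"
begin

lemma gl_joint[measurable]: "(\<lambda>x. gl (fst x) (snd x)) \<in> borel_measurable (MZ \<Otimes>\<^sub>M (borel::'a measure))"
  by (rule grad_meas[OF l_meas l_grad])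

lemma gl_meas[measurable]: "(\<lambda>z. gl z \<theta>) \<in> borel_measurable MZ"
  using measurable_compose[OF measurable_Pair[OF measurable_ident_sets[OF refl] measurable_const[of \<theta>]] gl_joint]
  by simp

lemma dens_facts:
  assumes "is_density MZ q"
  shows "q \<in> borel_measurable MZ" "\<And>z. z \<in> space MZ \<Longrightarrow> 0 \<le> q z" "integrable MZ q" "integral\<^sup>L MZ q = 1"
    "(\<integral>\<^sup>+ z. ennreal (q z) \<partial>MZ) = 1"
proof -
  show qm: "q \<in> borel_measurable MZ" and q0: "\<And>z. z \<in> space MZ \<Longrightarrow> 0 \<le> q z"
    and q1: "(\<integral>\<^sup>+ z. ennreal (q z) \<partial>MZ) = 1"
    using assms by (auto simp: is_density_def)
  show qi: "integrable MZ q" by (rule integrableI_nonneg) (use qm q0 q1 in auto)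
  have "ennreal (integral\<^sup>L MZ q) = 1" using nn_integral_eq_integral[OF qi] q0 q1 by simp
  then show "integral\<^sup>L MZ q = 1" by (metis ennreal_1 ennreal_eq_1)
qed

lemma c_lim: "(\<lambda>s. l1_dist MZ (p s) pstar) \<longlonglongrightarrow> 0"
  using summable_LIMSEQ_zero[OF A4] .

lemma c_nn: "(\<integral>\<^sup>+ z. ennreal \<bar>p s z - pstar z\<bar> \<partial>MZ) = ennreal (l1_dist MZ (p s) pstar)"
  unfolding l1_dist_def
  using dens_facts[OF dens[of s]] dens_facts[OF dens_star]
  by (intro nn_integral_eq_integral) auto

lemma A3_star: "(\<integral>\<^sup>+ z. ennreal ((norm (gl z \<theta>))\<^sup>2 * pstar z) \<partial>MZ) \<le> ennreal G"
proof -
  define g where "g z = (norm (gl z \<theta>))\<^sup>2" for z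
  define T where "T n z = min (g z) (real n)" for n z
  have gm[measurable]: "g \<in> borel_measurable MZ" unfolding g_def by measurable
  note ps = dens_facts[OF dens_star]
  have bnd: "(\<integral>\<^sup>+ z. ennreal (T n z) * ennreal (pstar z) \<partial>MZ) \<le> ennreal G" for n
  proof -
    have le: "(\<integral>\<^sup>+ z. ennreal (T n z) * ennreal (pstar z) \<partial>MZ) \<le> ennreal (G + real n * l1_dist MZ (p s) pstar)" for s
    proof -
      note pss = dens_facts[OF dens[of s]]
      have "(\<integral>\<^sup>+ z. ennreal (T n z) * ennreal (pstar z) \<partial>MZ)
          \<le> (\<integral>\<^sup>+ z. ennreal (g z * p s z) + ennreal (real n) * ennreal \<bar>p s z - pstar z\<bar> \<partial>MZ)"
      proof (rule nn_integral_mono)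
        fix z assume z: "z \<in> space MZ"
        have T0: "0 \<le> T n z" "T n z \<le> g z" "T n z \<le> real n" by (auto simp: T_def g_def)
        have "T n z * pstar z \<le> g z * p s z + real n * \<bar>p s z - pstar z\<bar>"
        proof -
          have "T n z * pstar z = T n z * p s z + T n z * (pstar z - p s z)" by (simp add: algebra_simps)
          also have "T n z * p s z \<le> g z * p s z" using T0 pss(2)[OF z] by (simp add: mult_right_mono)
          also have "T n z * (pstar z - p s z) \<le> real n * \<bar>p s z - pstar z\<bar>"
            using T0 by (smt (verit) mult_left_mono mult_right_mono abs_ge_zero abs_minus_commute abs_ge_self)
          finally show ?thesis by simp
        qed
        then show "ennreal (T n z) * ennreal (pstar z) \<le> ennreal (g z * p s z) + ennreal (real n) * ennreal \<bar>p s z - pstar z\<bar>"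
          using T0 ps(2)[OF z] pss(2)[OF z]
          by (simp add: ennreal_mult[symmetric] ennreal_plus[symmetric] del: ennreal_plus)
      qed
      also have "\<dots> = (\<integral>\<^sup>+ z. ennreal (g z * p s z) \<partial>MZ) + ennreal (real n) * (\<integral>\<^sup>+ z. ennreal \<bar>p s z - pstar z\<bar> \<partial>MZ)"
        using pss(1) ps(1) by (simp add: nn_integral_add nn_integral_cmult)
      also have "\<dots> \<le> ennreal G + ennreal (real n) * ennreal (l1_dist MZ (p s) pstar)"
        using A3[where s=s and \<theta>=\<theta>] c_nn[of s] unfolding g_def by (intro add_mono) auto
      also have "\<dots> = ennreal (G + real n * l1_dist MZ (p s) pstar)"
        using G_pos by (simp add: ennreal_mult[symmetric] ennreal_plus[symmetric] l1_dist_def del: ennreal_plus)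
      finally show ?thesis .
    qed
    have "(\<lambda>s. ennreal (G + real n * l1_dist MZ (p s) pstar)) \<longlonglongrightarrow> ennreal (G + real n * 0)"
      by (intro tendsto_intros c_lim)
    then show ?thesis using le by (intro LIMSEQ_le_const[where X="\<lambda>s. ennreal (G + real n * l1_dist MZ (p s) pstar)"]) auto
  qed
  have "(\<lambda>n. \<integral>\<^sup>+ z. ennreal (T n z) * ennreal (pstar z) \<partial>MZ) \<longlonglongrightarrow> (\<integral>\<^sup>+ z. ennreal (g z) * ennreal (pstar z) \<partial>MZ)"
  proof (rule nn_integral_LIMSEQ)
    show "incseq (\<lambda>n z. ennreal (T n z) * ennreal (pstar z))"
      by (auto simp: incseq_def le_fun_def T_def intro!: mult_right_mono ennreal_leI)
    show "(\<lambda>z. ennreal (T n z) * ennreal (pstar z)) \<in> borel_measurable MZ" for n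
      unfolding T_def using ps(1) by measurable
    fix z
    have "eventually (\<lambda>n. ennreal (T n z) * ennreal (pstar z) = ennreal (g z) * ennreal (pstar z)) sequentially"
      using eventually_ge_at_top[of "nat \<lceil>g z\<rceil>"]
    proof eventually_elim
      case (elim n)
      have "g z \<le> real (nat \<lceil>g z\<rceil>)" by (rule real_nat_ceiling_ge)
      also have "\<dots> \<le> real n" using elim by simp
      finally show ?case by (simp add: T_def)
    qed
    then show "(\<lambda>n. ennreal (T n z) * ennreal (pstar z)) \<longlonglongrightarrow> ennreal (g z) * ennreal (pstar z)"
      by (rule tendsto_eventually)
  qed
  then have "(\<integral>\<^sup>+ z. ennreal (g z) * ennreal (pstar z) \<partial>MZ) \<le> ennreal G"
    using bnd by (intro LIMSEQ_le_const2) auto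
  moreover have "(\<integral>\<^sup>+ z. ennreal (g z) * ennreal (pstar z) \<partial>MZ) = (\<integral>\<^sup>+ z. ennreal ((norm (gl z \<theta>))\<^sup>2 * pstar z) \<partial>MZ)"
    by (rule nn_integral_cong) (simp add: g_def ennreal_mult')
  ultimately show ?thesis by simp
qed

end





lemma prob_density:
  assumes "is_density MZ q" shows "prob_space (density MZ (\<lambda>z. ennreal (q z)))"
proof (rule prob_spaceI)
  have qm: "q \<in> borel_measurable MZ" and q1: "(\<integral>\<^sup>+ z. ennreal (q z) \<partial>MZ) = 1"
    using assms by (auto simp: is_density_def)
  have "emeasure (density MZ (\<lambda>z. ennreal (q z))) (space MZ) = (\<integral>\<^sup>+ z. ennreal (q z) * indicator (space MZ) z \<partial>MZ)"
    using qm by (intro emeasure_density) auto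
  also have "\<dots> = (\<integral>\<^sup>+ z. ennreal (q z) \<partial>MZ)" by (intro nn_integral_cong) auto
  finally show "emeasure (density MZ (\<lambda>z. ennreal (q z))) (space (density MZ (\<lambda>z. ennreal (q z)))) = 1"
    using q1 by simp
qed

context lsetting
begin

abbreviation "Q \<equiv> density MZ (\<lambda>z. ennreal (pstar z))"

lemma Q_prob: "prob_space Q" by (rule prob_density[OF dens_star])

lemma pstar_m[measurable]: "pstar \<in> borel_measurable MZ"
  using dens_star by (simp add: is_density_def)

lemma l_joint[measurable]: "(\<lambda>x. l (fst x) (snd x)) \<in> borel_measurable (MZ \<Otimes>\<^sub>M (borel::'a measure))"
proof (rule carath_meas[OF l_meas])
  show "continuous_on UNIV (l z)" for z
    by (rule continuous_at_imp_continuous_on) (use l_grad has_derivative_continuous in blast)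
qed

lemma risk_Q: "risk l MZ pstar \<theta> = integral\<^sup>L Q (\<lambda>z. l z \<theta>)"
  unfolding risk_def
  by (subst integral_density) (use dens_facts[OF dens_star] l_meas in \<open>auto simp: mult.commute\<close>)

lemma l_int_Q: "integrable Q (\<lambda>z. l z \<theta>)"
  by (subst integrable_density) (use dens_facts[OF dens_star] l_meas risk_finite in \<open>auto simp: mult.commute\<close>)

lemma nn_Q: "h \<in> borel_measurable MZ \<Longrightarrow> (\<integral>\<^sup>+ z. h z \<partial>Q) = (\<integral>\<^sup>+ z. ennreal (pstar z) * h z \<partial>MZ)"
  by (rule nn_integral_density) auto

lemma A3_Q: "(\<integral>\<^sup>+ z. ennreal ((norm (gl z \<theta>))\<^sup>2) \<partial>Q) \<le> ennreal G"
proof -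
  have "(\<integral>\<^sup>+ z. ennreal ((norm (gl z \<theta>))\<^sup>2) \<partial>Q) = (\<integral>\<^sup>+ z. ennreal ((norm (gl z \<theta>))\<^sup>2 * pstar z) \<partial>MZ)"
    by (subst nn_Q) (auto intro!: nn_integral_cong simp: ennreal_mult'' dens_facts(2)[OF dens_star] mult.commute)
  then show ?thesis using A3_star by simp
qed

lemma A3_Qv: "(\<integral>\<^sup>+ z. ennreal ((gl z \<theta> \<bullet> v)\<^sup>2) \<partial>Q) \<le> ennreal (G * (norm v)\<^sup>2)"
proof -
  have "(\<integral>\<^sup>+ z. ennreal ((gl z \<theta> \<bullet> v)\<^sup>2) \<partial>Q) \<le> (\<integral>\<^sup>+ z. ennreal ((norm (gl z \<theta>))\<^sup>2) * ennreal ((norm v)\<^sup>2) \<partial>Q)"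
  proof (rule nn_integral_mono)
    fix z
    have "\<bar>gl z \<theta> \<bullet> v\<bar> \<le> norm (gl z \<theta>) * norm v" by (rule Cauchy_Schwarz_ineq2)
    then have "(gl z \<theta> \<bullet> v)\<^sup>2 \<le> (norm (gl z \<theta>) * norm v)\<^sup>2"
      by (metis abs_ge_zero power2_abs power_mono)
    then show "ennreal ((gl z \<theta> \<bullet> v)\<^sup>2) \<le> ennreal ((norm (gl z \<theta>))\<^sup>2) * ennreal ((norm v)\<^sup>2)"
      by (simp add: ennreal_mult[symmetric] power_mult_distrib)
  qed
  also have "\<dots> = (\<integral>\<^sup>+ z. ennreal ((norm (gl z \<theta>))\<^sup>2) \<partial>Q) * ennreal ((norm v)\<^sup>2)"
    by (rule nn_integral_multc) measurable
  also have "\<dots> \<le> ennreal G * ennreal ((norm v)\<^sup>2)"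
    by (rule mult_right_mono[OF A3_Q]) simp
  also have "\<dots> = ennreal (G * (norm v)\<^sup>2)" using G_pos by (simp add: ennreal_mult)
  finally show ?thesis .
qed


lemma gl_comp[measurable (raw)]:
  "f \<in> measurable N MZ \<Longrightarrow> g \<in> borel_measurable N \<Longrightarrow> (\<lambda>x. gl (f x) (g x)) \<in> borel_measurable N"
  using measurable_compose[OF measurable_Pair gl_joint] by simp

lemma l_comp[measurable (raw)]:
  "f \<in> measurable N MZ \<Longrightarrow> g \<in> borel_measurable N \<Longrightarrow> (\<lambda>x. l (f x) (g x)) \<in> borel_measurable N"
  using measurable_compose[OF measurable_Pair l_joint] by simp

lemma quot_bound:
  assumes h: "0 < h"
  shows "(\<integral>\<^sup>+ z. ennreal (((l z (\<theta> + h *\<^sub>R v) - l z \<theta>)/h)\<^sup>2) \<partial>Q) \<le> ennreal (G * (norm v)\<^sup>2)"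
proof -
  interpret Qp: prob_space Q by (rule Q_prob)
  interpret pair_sigma_finite Q lborel by unfold_locales
  define F where "F x = ennreal ((gl (fst x) (\<theta> + snd x *\<^sub>R v) \<bullet> v)\<^sup>2 * indicator {0..h} (snd x))" for x
  have Fm: "F \<in> borel_measurable (Q \<Otimes>\<^sub>M lborel)" unfolding F_def by measurable
  have pt: "ennreal (((l z (\<theta> + h *\<^sub>R v) - l z \<theta>)/h)\<^sup>2) \<le> ennreal (1/h) * (\<integral>\<^sup>+ s. F (z, s) \<partial>lborel)"
    if z: "z \<in> space Q" for z
  proof -
    have zm: "(\<lambda>s. gl z (\<theta> + s *\<^sub>R v) \<bullet> v) \<in> borel_measurable borel" using z by measurable
    have "ennreal (((l z (\<theta> + h *\<^sub>R v) - l z \<theta>)/h)\<^sup>2) = ennreal ((l z (\<theta> + h *\<^sub>R v) - l z \<theta>)\<^sup>2) * ennreal (1/h^2)"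
      by (simp add: ennreal_mult[symmetric] power_divide)
    also have "\<dots> \<le> (ennreal h * (\<integral>\<^sup>+ s. F (z, s) \<partial>lborel)) * ennreal (1/h^2)"
    proof (rule mult_right_mono)
      show "ennreal ((l z (\<theta> + h *\<^sub>R v) - l z \<theta>)\<^sup>2) \<le> ennreal h * (\<integral>\<^sup>+ s. F (z, s) \<partial>lborel)"
        using line_sq_bound[OF l_grad zm h] by (simp add: F_def)
    qed simp
    also have "\<dots> = ennreal (1/h) * (\<integral>\<^sup>+ s. F (z, s) \<partial>lborel)"
    proof -
      have e: "ennreal h * ennreal (1/h^2) = ennreal (1/h)"
        using h by (simp add: ennreal_mult[symmetric] power2_eq_square)
      have "(ennreal h * (\<integral>\<^sup>+ s. F (z, s) \<partial>lborel)) * ennreal (1/h^2) = (ennreal h * ennreal (1/h^2)) * (\<integral>\<^sup>+ s. F (z, s) \<partial>lborel)"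
        by (simp only: mult_ac)
      then show ?thesis by (simp only: e)
    qed
    finally show ?thesis .
  qed
  have "(\<integral>\<^sup>+ z. ennreal (((l z (\<theta> + h *\<^sub>R v) - l z \<theta>)/h)\<^sup>2) \<partial>Q) \<le> (\<integral>\<^sup>+ z. ennreal (1/h) * (\<integral>\<^sup>+ s. F (z, s) \<partial>lborel) \<partial>Q)"
    by (rule nn_integral_mono) (rule pt)
  also have "\<dots> = ennreal (1/h) * (\<integral>\<^sup>+ z. (\<integral>\<^sup>+ s. F (z, s) \<partial>lborel) \<partial>Q)"
    by (rule nn_integral_cmult) (use Fm in measurable)
  also have "(\<integral>\<^sup>+ z. (\<integral>\<^sup>+ s. F (z, s) \<partial>lborel) \<partial>Q) = (\<integral>\<^sup>+ s. (\<integral>\<^sup>+ z. F (z, s) \<partial>Q) \<partial>lborel)"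
    by (rule Fubini'[of "\<lambda>z s. F (z, s)", symmetric]) (use Fm in simp)
  also have "\<dots> \<le> (\<integral>\<^sup>+ s. ennreal (G * (norm v)\<^sup>2) * indicator {0..h} s \<partial>lborel)"
  proof (rule nn_integral_mono)
    fix s
    have "(\<integral>\<^sup>+ z. F (z, s) \<partial>Q) = (\<integral>\<^sup>+ z. ennreal ((gl z (\<theta> + s *\<^sub>R v) \<bullet> v)\<^sup>2) * indicator {0..h} s \<partial>Q)"
      by (simp add: F_def ennreal_mult'' ennreal_indicator)
    also have "\<dots> = (\<integral>\<^sup>+ z. ennreal ((gl z (\<theta> + s *\<^sub>R v) \<bullet> v)\<^sup>2) \<partial>Q) * indicator {0..h} s"
      by (rule nn_integral_multc) measurable
    also have "\<dots> \<le> ennreal (G * (norm v)\<^sup>2) * indicator {0..h} s"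
      by (rule mult_right_mono[OF A3_Qv]) simp
    finally show "(\<integral>\<^sup>+ z. F (z, s) \<partial>Q) \<le> ennreal (G * (norm v)\<^sup>2) * indicator {0..h} s" .
  qed
  also have "\<dots> = ennreal (G * (norm v)\<^sup>2) * ennreal h"
    using h by (simp add: nn_integral_cmult_indicator)
  finally have "(\<integral>\<^sup>+ z. ennreal (((l z (\<theta> + h *\<^sub>R v) - l z \<theta>)/h)\<^sup>2) \<partial>Q) \<le> ennreal (1/h) * (ennreal (G * (norm v)\<^sup>2) * ennreal h)"
    by (simp add: mult_left_mono)
  also have "\<dots> = ennreal (G * (norm v)\<^sup>2)"
    using h G_pos by (simp add: ennreal_mult[symmetric])
  finally show ?thesis .
qed


lemma interchange: "gL \<theta> \<bullet> v = integral\<^sup>L Q (\<lambda>z. gl z \<theta> \<bullet> v)"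
proof -
  interpret Qp: prob_space Q by (rule Q_prob)
  define hn where "hn n = 1/real (Suc n)" for n
  define F where "F n z = (l z (\<theta> + hn n *\<^sub>R v) - l z \<theta>) / hn n" for n z
  have hn0: "0 < hn n" for n by (simp add: hn_def)
  have 1: "(\<lambda>n. integral\<^sup>L Q (F n)) \<longlonglongrightarrow> integral\<^sup>L Q (\<lambda>z. gl z \<theta> \<bullet> v)"
  proof (rule ui_conv[where B="G * (norm v)\<^sup>2"])
    show "finite_measure Q" using Q_prob unfolding prob_space_def by blast
    show "F n \<in> borel_measurable Q" for n unfolding F_def by measurable
    show "(\<lambda>z. gl z \<theta> \<bullet> v) \<in> borel_measurable Q" by measurable
    show "(\<lambda>n. F n z) \<longlonglongrightarrow> gl z \<theta> \<bullet> v" for z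
      unfolding F_def hn_def by (rule dir_deriv_seq[OF l_grad])
    show "(\<integral>\<^sup>+ z. ennreal ((F n z)\<^sup>2) \<partial>Q) \<le> ennreal (G * (norm v)\<^sup>2)" for n
      unfolding F_def by (rule quot_bound[OF hn0])
    show "(\<integral>\<^sup>+ z. ennreal ((gl z \<theta> \<bullet> v)\<^sup>2) \<partial>Q) \<le> ennreal (G * (norm v)\<^sup>2)" by (rule A3_Qv)
    show "0 \<le> G * (norm v)\<^sup>2" using G_pos by simp
  qed
  have eq: "integral\<^sup>L Q (F n) = (risk l MZ pstar (\<theta> + hn n *\<^sub>R v) - risk l MZ pstar \<theta>) / hn n" for n
    unfolding F_def risk_Q using l_int_Q by simp
  have 2: "(\<lambda>n. integral\<^sup>L Q (F n)) \<longlonglongrightarrow> gL \<theta> \<bullet> v"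
    unfolding eq hn_def by (rule dir_deriv_seq[OF A1_diff])
  show ?thesis by (rule LIMSEQ_unique[OF 2 1])
qed

end





context lsetting
begin

lemma wint:
  assumes q: "is_density MZ q" and A: "(\<integral>\<^sup>+ z. ennreal ((norm (gl z \<theta>))\<^sup>2 * q z) \<partial>MZ) \<le> ennreal G"
  shows "integrable MZ (\<lambda>z. (norm (gl z \<theta>))\<^sup>2 * q z)" "integrable MZ (\<lambda>z. norm (gl z \<theta>) * q z)"
    "integrable MZ (\<lambda>z. (u \<bullet> gl z \<theta>) * q z)"
    "integral\<^sup>L MZ (\<lambda>z. (norm (gl z \<theta>))\<^sup>2 * q z) \<le> G"
    "integral\<^sup>L MZ (\<lambda>z. norm (gl z \<theta>) * q z) \<le> sqrt G"
proof -
  note qf = dens_facts[OF q]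
  have qm[measurable]: "q \<in> borel_measurable MZ" by (rule qf(1))
  show i1: "integrable MZ (\<lambda>z. (norm (gl z \<theta>))\<^sup>2 * q z)"
  proof (rule integrableI_nonneg)
    show "(\<lambda>z. (norm (gl z \<theta>))\<^sup>2 * q z) \<in> borel_measurable MZ" by measurable
    show "AE x in MZ. 0 \<le> (norm (gl x \<theta>))\<^sup>2 * q x" using qf(2) by (auto intro!: AE_I2)
    show "(\<integral>\<^sup>+ z. ennreal ((norm (gl z \<theta>))\<^sup>2 * q z) \<partial>MZ) < \<infinity>"
      using A by (simp add: le_less_trans)
  qed
  have pt: "norm (gl z \<theta>) * q z \<le> (q z + (norm (gl z \<theta>))\<^sup>2 * q z) / 2" if z: "z \<in> space MZ" for z
  proof -
    have "0 \<le> (norm (gl z \<theta>) - 1)\<^sup>2 * q z" using qf(2)[OF z] by simp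
    then show ?thesis by (simp add: power2_eq_square algebra_simps)
  qed
  show i2: "integrable MZ (\<lambda>z. norm (gl z \<theta>) * q z)"
  proof (rule Bochner_Integration.integrable_bound)
    show "integrable MZ (\<lambda>z. (q z + (norm (gl z \<theta>))\<^sup>2 * q z) / 2)" using i1 qf(3) by simp
    show "(\<lambda>z. norm (gl z \<theta>) * q z) \<in> borel_measurable MZ" by measurable
    show "AE x in MZ. norm (norm (gl x \<theta>) * q x) \<le> norm ((q x + (norm (gl x \<theta>))\<^sup>2 * q x) / 2)"
      using pt qf(2) by (auto intro!: AE_I2)
  qed
  show "integrable MZ (\<lambda>z. (u \<bullet> gl z \<theta>) * q z)"
  proof (rule Bochner_Integration.integrable_bound)
    show "integrable MZ (\<lambda>z. norm u * (norm (gl z \<theta>) * q z))" using i2 by simp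
    show "(\<lambda>z. (u \<bullet> gl z \<theta>) * q z) \<in> borel_measurable MZ" by measurable
    show "AE x in MZ. norm ((u \<bullet> gl x \<theta>) * q x) \<le> norm (norm u * (norm (gl x \<theta>) * q x))"
    proof (rule AE_I2)
      fix x assume x: "x \<in> space MZ"
      have "\<bar>u \<bullet> gl x \<theta>\<bar> * q x \<le> (norm u * norm (gl x \<theta>)) * q x"
        using qf(2)[OF x] Cauchy_Schwarz_ineq2 by (intro mult_right_mono) auto
      then show "norm ((u \<bullet> gl x \<theta>) * q x) \<le> norm (norm u * (norm (gl x \<theta>) * q x))"
        using qf(2)[OF x] by (simp add: abs_mult mult_ac)
    qed
  qed
  have "ennreal (integral\<^sup>L MZ (\<lambda>z. (norm (gl z \<theta>))\<^sup>2 * q z)) = (\<integral>\<^sup>+ z. ennreal ((norm (gl z \<theta>))\<^sup>2 * q z) \<partial>MZ)"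
    using qf(2) by (intro nn_integral_eq_integral[OF i1, symmetric]) (auto intro!: AE_I2)
  then show i4: "integral\<^sup>L MZ (\<lambda>z. (norm (gl z \<theta>))\<^sup>2 * q z) \<le> G"
    using A G_pos by (metis ennreal_le_iff less_imp_le)
  show "integral\<^sup>L MZ (\<lambda>z. norm (gl z \<theta>) * q z) \<le> sqrt G"
  proof -
    have "integral\<^sup>L MZ (\<lambda>z. norm (gl z \<theta>) * q z) \<le> sqrt (G * 1)"
    proof (rule amgm_inf)
      fix t :: real assume t: "0 < t"
      have "integral\<^sup>L MZ (\<lambda>z. norm (gl z \<theta>) * q z) \<le> integral\<^sup>L MZ (\<lambda>z. (t * ((norm (gl z \<theta>))\<^sup>2 * q z) + q z / t) / 2)"
      proof (rule integral_mono)
        show "integrable MZ (\<lambda>z. (t * ((norm (gl z \<theta>))\<^sup>2 * q z) + q z / t) / 2)" using i1 qf(3) by simp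
        show "integrable MZ (\<lambda>z. norm (gl z \<theta>) * q z)" by (rule i2)
        fix z assume z: "z \<in> space MZ"
        have "0 \<le> (t * norm (gl z \<theta>) - 1)\<^sup>2 * q z / t" using qf(2)[OF z] t by simp
        then show "norm (gl z \<theta>) * q z \<le> (t * ((norm (gl z \<theta>))\<^sup>2 * q z) + q z / t) / 2"
          using t by (simp add: power2_eq_square field_simps)
      qed
      also have "\<dots> = (t * integral\<^sup>L MZ (\<lambda>z. (norm (gl z \<theta>))\<^sup>2 * q z) + 1 / t) / 2"
        using i1 qf(3) qf(4) by simp
      also have "\<dots> \<le> (G * t + 1 / t) / 2" using i4 t by (simp add: mult.commute)
      finally show "integral\<^sup>L MZ (\<lambda>z. norm (gl z \<theta>) * q z) \<le> (G * t + 1 / t) / 2" .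
    qed (use G_pos in auto)
    then show ?thesis by simp
  qed
qed


lemma inner_lower:
  "(norm (gL \<theta>))\<^sup>2 - sqrt 2 * G * sqrt (l1_dist MZ (p s) pstar) \<le> integral\<^sup>L MZ (\<lambda>z. (gL \<theta> \<bullet> gl z \<theta>) * p s z)"
proof -
  define u where "u = gL \<theta>"
  define c where "c = l1_dist MZ (p s) pstar"
  note ws0 = wint[OF dens[of s] A3[where s=s and \<theta>=\<theta>]]
  note wt0 = wint[OF dens_star A3_star[where \<theta>=\<theta>]]
  have ws: "integrable MZ (\<lambda>z. (norm (gl z \<theta>))\<^sup>2 * p s z)" "integrable MZ (\<lambda>z. norm (gl z \<theta>) * p s z)"
    "integrable MZ (\<lambda>z. (u \<bullet> gl z \<theta>) * p s z)"
    "integral\<^sup>L MZ (\<lambda>z. (norm (gl z \<theta>))\<^sup>2 * p s z) \<le> G"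
    "integral\<^sup>L MZ (\<lambda>z. norm (gl z \<theta>) * p s z) \<le> sqrt G" using ws0 by blast+
  have wt: "integrable MZ (\<lambda>z. (norm (gl z \<theta>))\<^sup>2 * pstar z)" "integrable MZ (\<lambda>z. norm (gl z \<theta>) * pstar z)"
    "integrable MZ (\<lambda>z. (u \<bullet> gl z \<theta>) * pstar z)"
    "integral\<^sup>L MZ (\<lambda>z. (norm (gl z \<theta>))\<^sup>2 * pstar z) \<le> G"
    "integral\<^sup>L MZ (\<lambda>z. norm (gl z \<theta>) * pstar z) \<le> sqrt G" using wt0 by blast+
  note pf = dens_facts[OF dens[of s]] and sf = dens_facts[OF dens_star]
  have psm[measurable]: "p s \<in> borel_measurable MZ" by (rule pf(1))
  have iD: "integrable MZ (\<lambda>z. \<bar>p s z - pstar z\<bar>)" using pf(3) sf(3) by simp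
  have cD: "integral\<^sup>L MZ (\<lambda>z. \<bar>p s z - pstar z\<bar>) = c" by (simp add: c_def l1_dist_def)
  have c0: "0 \<le> c" unfolding c_def l1_dist_def by simp
  have ustar: "integral\<^sup>L MZ (\<lambda>z. (u \<bullet> gl z \<theta>) * pstar z) = (norm u)\<^sup>2"
  proof -
    have "(norm u)\<^sup>2 = gL \<theta> \<bullet> u" by (simp add: u_def power2_norm_eq_inner)
    also have "\<dots> = integral\<^sup>L Q (\<lambda>z. gl z \<theta> \<bullet> u)" by (rule interchange)
    also have "\<dots> = integral\<^sup>L MZ (\<lambda>z. pstar z *\<^sub>R (gl z \<theta> \<bullet> u))"
      by (rule integral_density) (use sf(2) in \<open>auto intro!: AE_I2\<close>)
    also have "\<dots> = integral\<^sup>L MZ (\<lambda>z. (u \<bullet> gl z \<theta>) * pstar z)"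
      by (simp add: inner_commute mult.commute)
    finally show ?thesis by simp
  qed
  have i2D: "integrable MZ (\<lambda>z. (norm (gl z \<theta>))\<^sup>2 * \<bar>p s z - pstar z\<bar>)"
  proof (rule Bochner_Integration.integrable_bound)
    show "integrable MZ (\<lambda>z. (norm (gl z \<theta>))\<^sup>2 * p s z + (norm (gl z \<theta>))\<^sup>2 * pstar z)" using ws(1) wt(1) by simp
    show "(\<lambda>z. (norm (gl z \<theta>))\<^sup>2 * \<bar>p s z - pstar z\<bar>) \<in> borel_measurable MZ" by measurable
    show "AE x in MZ. norm ((norm (gl x \<theta>))\<^sup>2 * \<bar>p s x - pstar x\<bar>) \<le> norm ((norm (gl x \<theta>))\<^sup>2 * p s x + (norm (gl x \<theta>))\<^sup>2 * pstar x)"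
    proof (rule AE_I2)
      fix x assume x: "x \<in> space MZ"
      have "\<bar>p s x - pstar x\<bar> \<le> p s x + pstar x" using pf(2)[OF x] sf(2)[OF x] by simp
      then have "(norm (gl x \<theta>))\<^sup>2 * \<bar>p s x - pstar x\<bar> \<le> (norm (gl x \<theta>))\<^sup>2 * (p s x + pstar x)"
        by (rule mult_left_mono) simp
      then show "norm ((norm (gl x \<theta>))\<^sup>2 * \<bar>p s x - pstar x\<bar>) \<le> norm ((norm (gl x \<theta>))\<^sup>2 * p s x + (norm (gl x \<theta>))\<^sup>2 * pstar x)"
        using pf(2)[OF x] sf(2)[OF x] by (simp add: algebra_simps)
    qed
  qed
  have i1D: "integrable MZ (\<lambda>z. norm (gl z \<theta>) * \<bar>p s z - pstar z\<bar>)"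
  proof (rule Bochner_Integration.integrable_bound)
    show "integrable MZ (\<lambda>z. norm (gl z \<theta>) * p s z + norm (gl z \<theta>) * pstar z)" using ws(2) wt(2) by simp
    show "(\<lambda>z. norm (gl z \<theta>) * \<bar>p s z - pstar z\<bar>) \<in> borel_measurable MZ" by measurable
    show "AE x in MZ. norm (norm (gl x \<theta>) * \<bar>p s x - pstar x\<bar>) \<le> norm (norm (gl x \<theta>) * p s x + norm (gl x \<theta>) * pstar x)"
    proof (rule AE_I2)
      fix x assume x: "x \<in> space MZ"
      have "\<bar>p s x - pstar x\<bar> \<le> p s x + pstar x" using pf(2)[OF x] sf(2)[OF x] by simp
      then have "norm (gl x \<theta>) * \<bar>p s x - pstar x\<bar> \<le> norm (gl x \<theta>) * (p s x + pstar x)"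
        by (rule mult_left_mono) simp
      then show "norm (norm (gl x \<theta>) * \<bar>p s x - pstar x\<bar>) \<le> norm (norm (gl x \<theta>) * p s x + norm (gl x \<theta>) * pstar x)"
        using pf(2)[OF x] sf(2)[OF x] by (simp add: algebra_simps)
    qed
  qed
  have i2Dle: "integral\<^sup>L MZ (\<lambda>z. (norm (gl z \<theta>))\<^sup>2 * \<bar>p s z - pstar z\<bar>) \<le> 2 * G"
  proof -
    have "integral\<^sup>L MZ (\<lambda>z. (norm (gl z \<theta>))\<^sup>2 * \<bar>p s z - pstar z\<bar>) \<le> integral\<^sup>L MZ (\<lambda>z. (norm (gl z \<theta>))\<^sup>2 * p s z + (norm (gl z \<theta>))\<^sup>2 * pstar z)"
    proof (rule integral_mono[OF i2D])
      show "integrable MZ (\<lambda>z. (norm (gl z \<theta>))\<^sup>2 * p s z + (norm (gl z \<theta>))\<^sup>2 * pstar z)" using ws(1) wt(1) by simp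
      fix x assume x: "x \<in> space MZ"
      have "\<bar>p s x - pstar x\<bar> \<le> p s x + pstar x" using pf(2)[OF x] sf(2)[OF x] by simp
      then have "(norm (gl x \<theta>))\<^sup>2 * \<bar>p s x - pstar x\<bar> \<le> (norm (gl x \<theta>))\<^sup>2 * (p s x + pstar x)"
        by (rule mult_left_mono) simp
      then show "(norm (gl x \<theta>))\<^sup>2 * \<bar>p s x - pstar x\<bar> \<le> (norm (gl x \<theta>))\<^sup>2 * p s x + (norm (gl x \<theta>))\<^sup>2 * pstar x"
        by (simp add: algebra_simps)
    qed
    also have "\<dots> \<le> 2 * G" using ws(1) wt(1) ws(4) wt(4) by simp
    finally show ?thesis .
  qed
  have Dle: "integral\<^sup>L MZ (\<lambda>z. norm (gl z \<theta>) * \<bar>p s z - pstar z\<bar>) \<le> sqrt ((2 * G) * c)"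
  proof (rule amgm_inf)
    fix t :: real assume t: "0 < t"
    have "integral\<^sup>L MZ (\<lambda>z. norm (gl z \<theta>) * \<bar>p s z - pstar z\<bar>)
        \<le> integral\<^sup>L MZ (\<lambda>z. (t * ((norm (gl z \<theta>))\<^sup>2 * \<bar>p s z - pstar z\<bar>) + \<bar>p s z - pstar z\<bar> / t) / 2)"
    proof (rule integral_mono[OF i1D])
      show "integrable MZ (\<lambda>z. (t * ((norm (gl z \<theta>))\<^sup>2 * \<bar>p s z - pstar z\<bar>) + \<bar>p s z - pstar z\<bar> / t) / 2)"
        using i2D iD by simp
      fix z
      have "0 \<le> (t * norm (gl z \<theta>) - 1)\<^sup>2 * \<bar>p s z - pstar z\<bar> / t" using t by simp
      then show "norm (gl z \<theta>) * \<bar>p s z - pstar z\<bar> \<le> (t * ((norm (gl z \<theta>))\<^sup>2 * \<bar>p s z - pstar z\<bar>) + \<bar>p s z - pstar z\<bar> / t) / 2"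
        using t by (simp add: power2_eq_square field_simps)
    qed
    also have "\<dots> = (t * integral\<^sup>L MZ (\<lambda>z. (norm (gl z \<theta>))\<^sup>2 * \<bar>p s z - pstar z\<bar>) + c / t) / 2"
      using i2D iD cD by simp
    also have "\<dots> \<le> ((2 * G) * t + c / t) / 2" using i2Dle t by (simp add: mult.commute)
    finally show "integral\<^sup>L MZ (\<lambda>z. norm (gl z \<theta>) * \<bar>p s z - pstar z\<bar>) \<le> ((2 * G) * t + c / t) / 2" .
  qed (use G_pos c0 in auto)
  have ule: "norm u \<le> sqrt G"
  proof -
    have "(norm u)\<^sup>2 \<le> integral\<^sup>L MZ (\<lambda>z. norm u * (norm (gl z \<theta>) * pstar z))"
      unfolding ustar[symmetric]
    proof (rule integral_mono[OF wt(3)])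
      show "integrable MZ (\<lambda>z. norm u * (norm (gl z \<theta>) * pstar z))" using wt(2) by simp
      fix x assume x: "x \<in> space MZ"
      have "(u \<bullet> gl x \<theta>) * pstar x \<le> (norm u * norm (gl x \<theta>)) * pstar x"
        using sf(2)[OF x] norm_cauchy_schwarz by (intro mult_right_mono) auto
      then show "(u \<bullet> gl x \<theta>) * pstar x \<le> norm u * (norm (gl x \<theta>) * pstar x)" by (simp add: mult_ac)
    qed
    also have "\<dots> = norm u * integral\<^sup>L MZ (\<lambda>z. norm (gl z \<theta>) * pstar z)" by simp
    also have "\<dots> \<le> norm u * sqrt G" by (rule mult_left_mono[OF wt(5)]) simp
    finally have "(norm u)\<^sup>2 \<le> norm u * sqrt G" .
    then show ?thesis using G_pos by (cases "norm u = 0") (auto simp: power2_eq_square)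
  qed
  have split: "integral\<^sup>L MZ (\<lambda>z. (u \<bullet> gl z \<theta>) * p s z)
      = integral\<^sup>L MZ (\<lambda>z. (u \<bullet> gl z \<theta>) * pstar z) + integral\<^sup>L MZ (\<lambda>z. (u \<bullet> gl z \<theta>) * (p s z - pstar z))"
  proof -
    have "integral\<^sup>L MZ (\<lambda>z. (u \<bullet> gl z \<theta>) * (p s z - pstar z)) = integral\<^sup>L MZ (\<lambda>z. (u \<bullet> gl z \<theta>) * p s z - (u \<bullet> gl z \<theta>) * pstar z)"
      by (simp add: algebra_simps)
    also have "\<dots> = integral\<^sup>L MZ (\<lambda>z. (u \<bullet> gl z \<theta>) * p s z) - integral\<^sup>L MZ (\<lambda>z. (u \<bullet> gl z \<theta>) * pstar z)"
      using ws(3) wt(3) by simp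
    finally show ?thesis by simp
  qed
  have diffle: "- (norm u * integral\<^sup>L MZ (\<lambda>z. norm (gl z \<theta>) * \<bar>p s z - pstar z\<bar>)) \<le> integral\<^sup>L MZ (\<lambda>z. (u \<bullet> gl z \<theta>) * (p s z - pstar z))"
  proof -
    have "- (norm u * integral\<^sup>L MZ (\<lambda>z. norm (gl z \<theta>) * \<bar>p s z - pstar z\<bar>)) = integral\<^sup>L MZ (\<lambda>z. - (norm u * (norm (gl z \<theta>) * \<bar>p s z - pstar z\<bar>)))"
      by simp
    also have "\<dots> \<le> integral\<^sup>L MZ (\<lambda>z. (u \<bullet> gl z \<theta>) * (p s z - pstar z))"
    proof (rule integral_mono)
      show "integrable MZ (\<lambda>z. - (norm u * (norm (gl z \<theta>) * \<bar>p s z - pstar z\<bar>)))" using i1D by simp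
      have "integrable MZ (\<lambda>z. (u \<bullet> gl z \<theta>) * p s z - (u \<bullet> gl z \<theta>) * pstar z)" using ws(3) wt(3) by simp
      then show "integrable MZ (\<lambda>z. (u \<bullet> gl z \<theta>) * (p s z - pstar z))" by (simp add: algebra_simps)
      fix z
      have "\<bar>(u \<bullet> gl z \<theta>) * (p s z - pstar z)\<bar> \<le> norm u * (norm (gl z \<theta>) * \<bar>p s z - pstar z\<bar>)"
      proof -
        have "\<bar>u \<bullet> gl z \<theta>\<bar> \<le> norm u * norm (gl z \<theta>)" by (rule Cauchy_Schwarz_ineq2)
        then have "\<bar>u \<bullet> gl z \<theta>\<bar> * \<bar>p s z - pstar z\<bar> \<le> norm u * norm (gl z \<theta>) * \<bar>p s z - pstar z\<bar>"
          by (rule mult_right_mono) simp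
        then show ?thesis by (simp add: abs_mult mult_ac)
      qed
      then show "- (norm u * (norm (gl z \<theta>) * \<bar>p s z - pstar z\<bar>)) \<le> (u \<bullet> gl z \<theta>) * (p s z - pstar z)"
        by linarith
    qed
    finally show ?thesis .
  qed
  have "norm u * integral\<^sup>L MZ (\<lambda>z. norm (gl z \<theta>) * \<bar>p s z - pstar z\<bar>) \<le> sqrt G * sqrt ((2 * G) * c)"
    by (rule mult_mono[OF ule Dle]) (use G_pos in simp_all)
  also have "sqrt G * sqrt ((2 * G) * c) = sqrt 2 * G * sqrt c"
  proof -
    have "sqrt G * sqrt ((2 * G) * c) = sqrt (G * ((2 * G) * c))" by (rule real_sqrt_mult[symmetric])
    also have "G * ((2 * G) * c) = G\<^sup>2 * (2 * c)" by (simp add: power2_eq_square)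
    also have "sqrt (G\<^sup>2 * (2 * c)) = sqrt (G\<^sup>2) * sqrt (2 * c)" by (rule real_sqrt_mult)
    also have "sqrt (G\<^sup>2) = G" using G_pos by simp
    also have "sqrt (2 * c) = sqrt 2 * sqrt c" by (rule real_sqrt_mult)
    finally show ?thesis by simp
  qed
  finally have "norm u * integral\<^sup>L MZ (\<lambda>z. norm (gl z \<theta>) * \<bar>p s z - pstar z\<bar>) \<le> sqrt 2 * G * sqrt c" .
  then show ?thesis
    using split diffle ustar unfolding u_def c_def by linarith
qed

end





context lsetting
begin

lemma risk_nonneg: "0 \<le> risk l MZ pstar \<theta>"
  unfolding risk_def using dens_facts(2)[OF dens_star] l_nonneg
  by (intro integral_nonneg_AE AE_I2) simp

lemma pointwise:
  assumes eta: "0 < \<eta>"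
  shows "(\<integral>\<^sup>+ z. ennreal (p s z) * ennreal (risk l MZ pstar (\<theta> - \<eta> *\<^sub>R gl z \<theta>)) \<partial>MZ) + ennreal \<eta> * ennreal ((norm (gL \<theta>))\<^sup>2)
     \<le> ennreal (risk l MZ pstar \<theta>) + ennreal (\<eta> * (sqrt 2 * G * sqrt (l1_dist MZ (p s) pstar))) + ennreal (L * G / 2 * \<eta>\<^sup>2)"
proof -
  define u where "u = gL \<theta>"
  define R where "R = risk l MZ pstar"
  define c where "c = l1_dist MZ (p s) pstar"
  define Rz where "Rz z = R \<theta> - \<eta> * (u \<bullet> gl z \<theta>) + L / 2 * \<eta>\<^sup>2 * (norm (gl z \<theta>))\<^sup>2" for z
  have L0: "0 \<le> L" using A1_lip lipschitz_on_def by blast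
  have c0: "0 \<le> c" unfolding c_def l1_dist_def by simp
  note pf = dens_facts[OF dens[of s]]
  have psm[measurable]: "p s \<in> borel_measurable MZ" by (rule pf(1))
  note ws0 = wint[OF dens[of s] A3[where s=s and \<theta>=\<theta>]]
  have ws: "integrable MZ (\<lambda>z. (norm (gl z \<theta>))\<^sup>2 * p s z)"
    "integrable MZ (\<lambda>z. (u \<bullet> gl z \<theta>) * p s z)"
    "integral\<^sup>L MZ (\<lambda>z. (norm (gl z \<theta>))\<^sup>2 * p s z) \<le> G" using ws0 by blast+
  have desc: "R (\<theta> - \<eta> *\<^sub>R gl z \<theta>) \<le> Rz z" for z
  proof -
    have "R (\<theta> - \<eta> *\<^sub>R gl z \<theta>) \<le> R \<theta> + gL \<theta> \<bullet> ((\<theta> - \<eta> *\<^sub>R gl z \<theta>) - \<theta>) + L/2 * (norm ((\<theta> - \<eta> *\<^sub>R gl z \<theta>) - \<theta>))\<^sup>2"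
      unfolding R_def by (rule descent[OF A1_diff A1_lip])
    also have "\<dots> = Rz z" using eta
      by (simp add: Rz_def u_def inner_diff_right power_mult_distrib abs_of_pos)
    finally show ?thesis .
  qed
  have Rz0: "0 \<le> Rz z" for z using desc[of z] risk_nonneg[of "\<theta> - \<eta> *\<^sub>R gl z \<theta>"] unfolding R_def by linarith
  have pRz: "(\<lambda>z. p s z * Rz z) = (\<lambda>z. R \<theta> * p s z - \<eta> * ((u \<bullet> gl z \<theta>) * p s z) + L / 2 * \<eta>\<^sup>2 * ((norm (gl z \<theta>))\<^sup>2 * p s z))"
    by (rule ext) (simp add: Rz_def algebra_simps)
  have ipRz: "integrable MZ (\<lambda>z. p s z * Rz z)" unfolding pRz using ws pf(3) by simp
  have IpRz: "integral\<^sup>L MZ (\<lambda>z. p s z * Rz z) = R \<theta> - \<eta> * integral\<^sup>L MZ (\<lambda>z. (u \<bullet> gl z \<theta>) * p s z) + L / 2 * \<eta>\<^sup>2 * integral\<^sup>L MZ (\<lambda>z. (norm (gl z \<theta>))\<^sup>2 * p s z)"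
    unfolding pRz using ws pf(3) pf(4) by simp
  have low: "(norm u)\<^sup>2 - sqrt 2 * G * sqrt c \<le> integral\<^sup>L MZ (\<lambda>z. (u \<bullet> gl z \<theta>) * p s z)"
    unfolding u_def c_def by (rule inner_lower)
  have "L / 2 * \<eta>\<^sup>2 * integral\<^sup>L MZ (\<lambda>z. (norm (gl z \<theta>))\<^sup>2 * p s z) \<le> L / 2 * \<eta>\<^sup>2 * G"
    by (rule mult_left_mono[OF ws(3)]) (use L0 in simp)
  moreover have "\<eta> * ((norm u)\<^sup>2 - sqrt 2 * G * sqrt c) \<le> \<eta> * integral\<^sup>L MZ (\<lambda>z. (u \<bullet> gl z \<theta>) * p s z)"
    by (rule mult_left_mono[OF low]) (use eta in simp)
  ultimately have key: "integral\<^sup>L MZ (\<lambda>z. p s z * Rz z) + \<eta> * (norm u)\<^sup>2 \<le> R \<theta> + \<eta> * (sqrt 2 * G * sqrt c) + L * G / 2 * \<eta>\<^sup>2"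
    unfolding IpRz by (simp add: algebra_simps)
  have "(\<integral>\<^sup>+ z. ennreal (p s z) * ennreal (R (\<theta> - \<eta> *\<^sub>R gl z \<theta>)) \<partial>MZ) \<le> (\<integral>\<^sup>+ z. ennreal (p s z * Rz z) \<partial>MZ)"
  proof (rule nn_integral_mono)
    fix z assume z: "z \<in> space MZ"
    have "p s z * R (\<theta> - \<eta> *\<^sub>R gl z \<theta>) \<le> p s z * Rz z" by (rule mult_left_mono[OF desc pf(2)[OF z]])
    then show "ennreal (p s z) * ennreal (R (\<theta> - \<eta> *\<^sub>R gl z \<theta>)) \<le> ennreal (p s z * Rz z)"
      using pf(2)[OF z] by (simp add: ennreal_mult'[symmetric] ennreal_leI)
  qed
  also have "\<dots> = ennreal (integral\<^sup>L MZ (\<lambda>z. p s z * Rz z))"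
    by (rule nn_integral_eq_integral[OF ipRz]) (use pf(2) Rz0 in \<open>auto intro!: AE_I2\<close>)
  finally have A: "(\<integral>\<^sup>+ z. ennreal (p s z) * ennreal (R (\<theta> - \<eta> *\<^sub>R gl z \<theta>)) \<partial>MZ) + ennreal \<eta> * ennreal ((norm u)\<^sup>2)
      \<le> ennreal (integral\<^sup>L MZ (\<lambda>z. p s z * Rz z)) + ennreal \<eta> * ennreal ((norm u)\<^sup>2)"
    by (rule add_right_mono)
  also have "\<dots> = ennreal (integral\<^sup>L MZ (\<lambda>z. p s z * Rz z) + \<eta> * (norm u)\<^sup>2)"
    using eta integral_nonneg_AE[of "\<lambda>z. p s z * Rz z" MZ] pf(2) Rz0
    by (subst ennreal_plus) (auto intro!: AE_I2 simp: ennreal_mult)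
  also have "\<dots> \<le> ennreal (R \<theta> + \<eta> * (sqrt 2 * G * sqrt c) + L * G / 2 * \<eta>\<^sup>2)"
    by (rule ennreal_leI[OF key])
  also have "\<dots> = ennreal (R \<theta>) + ennreal (\<eta> * (sqrt 2 * G * sqrt c)) + ennreal (L * G / 2 * \<eta>\<^sup>2)"
    using risk_nonneg[of \<theta>] eta G_pos L0 c0 unfolding R_def
    by (simp add: ennreal_plus[symmetric] del: ennreal_plus)
  finally show ?thesis unfolding R_def u_def c_def .
qed

end




theorem lemma2:
  fixes M :: "'w measure" and MZ :: "'z measure"
    and l :: "'z \<Rightarrow> 'a::euclidean_space \<Rightarrow> real" and gl :: "'z \<Rightarrow> 'a \<Rightarrow> 'a"
    and p :: "nat \<Rightarrow> 'z \<Rightarrow> real" and pstar :: "'z \<Rightarrow> real"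
    and gL :: "'a \<Rightarrow> 'a" and L G :: real and eta :: "nat \<Rightarrow> real"
    and Theta :: "nat \<Rightarrow> 'w \<Rightarrow> 'a" and Z :: "nat \<Rightarrow> 'w \<Rightarrow> 'z" and t :: nat
  assumes prob: "prob_space M"
    and l_nonneg: "\<And>z \<theta>. 0 \<le> l z \<theta>"
    and l_meas: "\<And>\<theta>. (\<lambda>z. l z \<theta>) \<in> borel_measurable MZ"
    and l_grad: "\<And>z \<theta>. (l z has_derivative (\<lambda>h. gl z \<theta> \<bullet> h)) (at \<theta>)"
    and dens: "\<And>s. is_density MZ (p s)" and dens_star: "is_density MZ pstar"
    and risk_finite: "\<And>\<theta>. integrable MZ (\<lambda>z. l z \<theta> * pstar z)"
    and A1_diff: "\<And>\<theta>. (risk l MZ pstar has_derivative (\<lambda>h. gL \<theta> \<bullet> h)) (at \<theta>)"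
    and A1_lip: "L-lipschitz_on UNIV gL"
    and G_pos: "G > 0"
    and A3: "\<And>s \<theta>. (\<integral>\<^sup>+ z. ennreal ((norm (gl z \<theta>))\<^sup>2 * p s z) \<partial>MZ) \<le> ennreal G"
    and A4: "summable (\<lambda>s. l1_dist MZ (p s) pstar)"
    and eta_pos: "\<And>s. eta s > 0"
    and Theta0_meas: "Theta 0 \<in> borel_measurable M"
    and Z_meas: "\<And>s. Z s \<in> measurable M MZ"
    and Theta_step: "\<And>s \<omega>. Theta (Suc s) \<omega> = Theta s \<omega> - eta s *\<^sub>R gl (Z s \<omega>) (Theta s \<omega>)"
    and Z_cond: "\<And>s A B. A \<in> past_events M (Theta 0) MZ Z s \<Longrightarrow> B \<in> sets MZ \<Longrightarrow>
        emeasure M (A \<inter> (Z s -` B \<inter> space M)) = emeasure M A * (\<integral>\<^sup>+ z\<in>B. ennreal (p s z) \<partial>MZ)"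
  shows "(\<integral>\<^sup>+ \<omega>. ennreal (risk l MZ pstar (Theta (Suc t) \<omega>)) \<partial>M)
           + ennreal (eta t) * (\<integral>\<^sup>+ \<omega>. ennreal ((norm (gL (Theta t \<omega>)))\<^sup>2) \<partial>M)
         \<le> (\<integral>\<^sup>+ \<omega>. ennreal (risk l MZ pstar (Theta t \<omega>)) \<partial>M)
           + ennreal (eta t * (sqrt 2 * G * sqrt (l1_dist MZ (p t) pstar)))
           + ennreal (L * G / 2 * (eta t)\<^sup>2)"
proof -
  interpret S: lsetting M MZ l gl p pstar gL L G
    by unfold_locales (fact l_nonneg l_meas l_grad dens dens_star risk_finite A1_diff A1_lip G_pos A3 A4)+
  interpret Mp: prob_space M by (rule prob)
  define R where "R = risk l MZ pstar"
  have L0: "0 \<le> L" using A1_lip lipschitz_on_def by blast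
  have Rm[measurable]: "R \<in> borel_measurable borel"
    unfolding R_def by (rule borel_measurable_continuous_onI, rule continuous_at_imp_continuous_on)
      (use A1_diff has_derivative_continuous in blast)
  have gLm[measurable]: "gL \<in> borel_measurable borel"
    by (rule borel_measurable_continuous_onI) (use A1_lip lipschitz_on_continuous_on in blast)
  have ThM[measurable]: "Theta s \<in> borel_measurable M" for s
  proof (induction s)
    case 0 show ?case by (rule Theta0_meas)
  next
    case (Suc s)
    have "Theta (Suc s) = (\<lambda>\<omega>. Theta s \<omega> - eta s *\<^sub>R gl (Z s \<omega>) (Theta s \<omega>))"
      by (rule ext) (rule Theta_step)
    also have "\<dots> \<in> borel_measurable M"
      using S.gl_comp[OF Z_meas Suc.IH] Suc.IH by measurable
    finally show ?case .
  qed
  have past: "Theta t -` C \<inter> space M \<in> past_events M (Theta 0) MZ Z t" if C: "C \<in> sets borel" for C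
  proof -
    define gen where "gen = ({Theta 0 -` A \<inter> space M | A. A \<in> sets (borel :: 'a measure)}
      \<union> (\<Union>i<t. {Z i -` B \<inter> space M | B. B \<in> sets MZ}))"
    define Mt where "Mt = sigma (space M) gen"
    have genP: "gen \<subseteq> Pow (space M)" unfolding gen_def by auto
    have sMt: "sets Mt = past_events M (Theta 0) MZ Z t"
      unfolding Mt_def past_events_def gen_def[symmetric] using genP by (rule sets_measure_of)
    have spMt: "space Mt = space M" unfolding Mt_def using genP by (rule space_measure_of)
    have gen_in: "X \<in> gen \<Longrightarrow> X \<in> sets Mt" for X
      unfolding sMt past_events_def gen_def[symmetric] by (rule sigma_sets.Basic)
    have Zt: "Z i \<in> measurable Mt MZ" if i: "i < t" for i
    proof (rule measurableI)
      show "x \<in> space Mt \<Longrightarrow> Z i x \<in> space MZ" for x using measurable_space[OF Z_meas[of i]] spMt by auto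
      show "A \<in> sets MZ \<Longrightarrow> Z i -` A \<inter> space Mt \<in> sets Mt" for A
        using i by (intro gen_in) (auto simp: gen_def spMt)
    qed
    have "s \<le> t \<Longrightarrow> Theta s \<in> borel_measurable Mt" for s
    proof (induction s)
      case 0
      show ?case
      proof (rule measurableI)
        show "A \<in> sets borel \<Longrightarrow> Theta 0 -` A \<inter> space Mt \<in> sets Mt" for A
          by (intro gen_in) (auto simp: gen_def spMt)
      qed simp
    next
      case (Suc s)
      then have s: "s < t" by simp
      have "Theta (Suc s) = (\<lambda>\<omega>. Theta s \<omega> - eta s *\<^sub>R gl (Z s \<omega>) (Theta s \<omega>))"
        by (rule ext) (rule Theta_step)
      also have "\<dots> \<in> borel_measurable Mt"
      proof -
        have IH: "Theta s \<in> borel_measurable Mt" using Suc.IH s by simp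
        have G: "(\<lambda>x. gl (Z s x) (Theta s x)) \<in> borel_measurable Mt" by (rule S.gl_comp[OF Zt[OF s] IH])
        show ?thesis by (rule borel_measurable_diff[OF IH borel_measurable_scaleR[OF borel_measurable_const G]])
      qed
      finally show ?case .
    qed
    then have "Theta t \<in> borel_measurable Mt" by simp
    from measurable_sets[OF this C] show ?thesis unfolding spMt sMt .
  qed
  define h where "h x = ennreal (R (fst x - eta t *\<^sub>R gl (snd x) (fst x)))" for x
  have hm[measurable]: "h \<in> borel_measurable (borel \<Otimes>\<^sub>M MZ)"
    unfolding h_def by measurable
  define H where "H \<theta> = (\<integral>\<^sup>+ z. ennreal (p t z) * ennreal (R (\<theta> - eta t *\<^sub>R gl z \<theta>)) \<partial>MZ)" for \<theta>
  define P where "P = density MZ (\<lambda>z. ennreal (p t z))"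
  interpret Pp: prob_space P unfolding P_def by (rule prob_density[OF dens])
  have ptm[measurable]: "p t \<in> borel_measurable MZ" using S.dens_facts(1)[OF dens] .
  have HP: "H \<theta> = (\<integral>\<^sup>+ z. h (\<theta>, z) \<partial>P)" for \<theta>
    unfolding H_def P_def h_def by (subst nn_integral_density) (auto intro!: measurable_compose[OF _ Rm])
  have Hm[measurable]: "H \<in> borel_measurable borel"
  proof -
    have "(\<lambda>\<theta>. \<integral>\<^sup>+ z. h (\<theta>, z) \<partial>P) \<in> borel_measurable borel"
      by (rule Pp.borel_measurable_nn_integral) (simp add: P_def)
    then show ?thesis by (simp add: HP[abs_def])
  qed
  define \<nu> where "\<nu> = distr M borel (Theta t)"
  interpret \<nu>p: prob_space \<nu> unfolding \<nu>_def by (rule Mp.prob_space_distr) simp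
  have TZm: "(\<lambda>\<omega>. (Theta t \<omega>, Z t \<omega>)) \<in> measurable M (borel \<Otimes>\<^sub>M MZ)"
    using Z_meas[of t] by measurable
  have joint: "\<nu> \<Otimes>\<^sub>M P = distr M (borel \<Otimes>\<^sub>M MZ) (\<lambda>\<omega>. (Theta t \<omega>, Z t \<omega>))"
  proof (rule pair_measure_eqI)
    show "sigma_finite_measure \<nu>" by unfold_locales
    show "sigma_finite_measure P" by unfold_locales
    show "sets (\<nu> \<Otimes>\<^sub>M P) = sets (distr M (borel \<Otimes>\<^sub>M MZ) (\<lambda>\<omega>. (Theta t \<omega>, Z t \<omega>)))"
      by (simp add: \<nu>_def P_def)
    fix A B assume A: "A \<in> sets \<nu>" and B: "B \<in> sets P"
    have A': "A \<in> sets borel" using A by (simp add: \<nu>_def)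
    have B': "B \<in> sets MZ" using B by (simp add: P_def)
    have "emeasure (distr M (borel \<Otimes>\<^sub>M MZ) (\<lambda>\<omega>. (Theta t \<omega>, Z t \<omega>))) (A \<times> B)
        = emeasure M ((\<lambda>\<omega>. (Theta t \<omega>, Z t \<omega>)) -` (A \<times> B) \<inter> space M)"
      using A' B' by (intro emeasure_distr[OF TZm]) auto
    also have "(\<lambda>\<omega>. (Theta t \<omega>, Z t \<omega>)) -` (A \<times> B) \<inter> space M = (Theta t -` A \<inter> space M) \<inter> (Z t -` B \<inter> space M)"
      by auto
    also have "emeasure M \<dots> = emeasure M (Theta t -` A \<inter> space M) * (\<integral>\<^sup>+ z\<in>B. ennreal (p t z) \<partial>MZ)"
      by (rule Z_cond[OF past[OF A'] B'])
    also have "emeasure M (Theta t -` A \<inter> space M) = emeasure \<nu> A"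
      unfolding \<nu>_def using A' by (intro emeasure_distr[symmetric]) auto
    also have "(\<integral>\<^sup>+ z\<in>B. ennreal (p t z) \<partial>MZ) = emeasure P B"
      unfolding P_def using B' by (intro emeasure_density[symmetric]) auto
    finally show "emeasure \<nu> A * emeasure P B = emeasure (distr M (borel \<Otimes>\<^sub>M MZ) (\<lambda>\<omega>. (Theta t \<omega>, Z t \<omega>))) (A \<times> B)"
      by simp
  qed
  have hm': "h \<in> borel_measurable (\<nu> \<Otimes>\<^sub>M P)"
    using hm by (simp add: \<nu>_def P_def)
  have indep: "(\<integral>\<^sup>+ \<omega>. h (Theta t \<omega>, Z t \<omega>) \<partial>M) = (\<integral>\<^sup>+ \<omega>. H (Theta t \<omega>) \<partial>M)"
  proof -
    have "(\<integral>\<^sup>+ \<omega>. h (Theta t \<omega>, Z t \<omega>) \<partial>M) = (\<integral>\<^sup>+ x. h x \<partial>distr M (borel \<Otimes>\<^sub>M MZ) (\<lambda>\<omega>. (Theta t \<omega>, Z t \<omega>)))"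
      by (rule nn_integral_distr[OF TZm, symmetric]) (use hm in simp)
    also have "\<dots> = (\<integral>\<^sup>+ x. h x \<partial>(\<nu> \<Otimes>\<^sub>M P))" by (simp only: joint)
    also have "\<dots> = (\<integral>\<^sup>+ \<theta>. (\<integral>\<^sup>+ z. h (\<theta>, z) \<partial>P) \<partial>\<nu>)"
      by (rule Pp.nn_integral_fst[OF hm', symmetric])
    also have "\<dots> = (\<integral>\<^sup>+ \<theta>. H \<theta> \<partial>\<nu>)" by (simp add: HP)
    also have "\<dots> = (\<integral>\<^sup>+ \<omega>. H (Theta t \<omega>) \<partial>M)"
      unfolding \<nu>_def by (rule nn_integral_distr) auto
    finally show ?thesis .
  qed
  have "(\<integral>\<^sup>+ \<omega>. ennreal (R (Theta (Suc t) \<omega>)) \<partial>M) + ennreal (eta t) * (\<integral>\<^sup>+ \<omega>. ennreal ((norm (gL (Theta t \<omega>)))\<^sup>2) \<partial>M)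
      = (\<integral>\<^sup>+ \<omega>. H (Theta t \<omega>) \<partial>M) + (\<integral>\<^sup>+ \<omega>. ennreal (eta t) * ennreal ((norm (gL (Theta t \<omega>)))\<^sup>2) \<partial>M)"
    using indep by (simp add: h_def Theta_step nn_integral_cmult)
  also have "\<dots> = (\<integral>\<^sup>+ \<omega>. H (Theta t \<omega>) + ennreal (eta t) * ennreal ((norm (gL (Theta t \<omega>)))\<^sup>2) \<partial>M)"
    by (rule nn_integral_add[symmetric]) measurable
  also have "\<dots> \<le> (\<integral>\<^sup>+ \<omega>. ennreal (R (Theta t \<omega>)) + ennreal (eta t * (sqrt 2 * G * sqrt (l1_dist MZ (p t) pstar)))
           + ennreal (L * G / 2 * (eta t)\<^sup>2) \<partial>M)"
    by (rule nn_integral_mono) (unfold H_def R_def, rule S.pointwise[OF eta_pos])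
  also have "\<dots> = (\<integral>\<^sup>+ \<omega>. ennreal (R (Theta t \<omega>)) \<partial>M) + ennreal (eta t * (sqrt 2 * G * sqrt (l1_dist MZ (p t) pstar)))
           + ennreal (L * G / 2 * (eta t)\<^sup>2)"
    by (simp add: nn_integral_add Mp.emeasure_space_1)
  finally show ?thesis unfolding R_def .
qed


end
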